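(* Let $A$ be a finite set with $N\ge 2$ elements and let $(v_{xy})$ be a Llull matrix on $A$ with CLC structure that is not identically zero. Let $\xi$ be any admissible order, let $\rho_x=\frac{1}{N-1}\sum_{y\neq x}v_{xy}$ be the mean preference scores, and let $X$ be the top dominant irreducible component of $A$. Then for all distinct $x,y\in A$: (a) if $x<_\xi y$ then $\rho_x\ge\rho_y$; (b) $\rho_x=\rho_y$ if and only if $v_{xy}=v_{yx}$; (c) if $\rho_x\ge\rho_y$ then $v_{xy}\ge v_{yx}$, and $v_{xz}\ge v_{yz}$ and $v_{zx}\le v_{zy}$ for every $z\notin\{x,y\}$; (d) $\rho_x>\rho_y$ if and only if $v_{xy}>v_{yx}$; (e) if $v_{xy}>v_{yx}$ then $x<_\xi y$; (f) $\rho_x>\rho_y$ whenever $x\in X$ and $y\notin X$.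
   Context: A Llull matrix on a finite set $A$ is an assignment to each ordered pair of distinct elements $x\neq y$ of $A$ of a number $v_{xy}\in[0,1]$ such that $v_{xy}+v_{yx}\le 1$. Turnouts: $t_{xy}=v_{xy}+v_{yx}$; margins: $m_{xy}=v_{xy}-v_{yx}$. The matrix has CLC structure if there is a total order $\xi$ on $A$ (an admissible order) such that, writing $x<_\xi y$ when $x$ precedes $y$ and $x'$ for the immediate successor of $x$ in $\xi$ (when it exists): (i) $v_{xy}\ge v_{yx}$ whenever $x<_\xi y$; (ii) $v_{xz}=\max(v_{xy},v_{yz})$ whenever $x<_\xi y<_\xi z$; (iii) $v_{zx}=\min(v_{zy},v_{yx})$ whenever $x<_\xi y<_\xi z$; (iv) $0\le t_{xz}-t_{x'z}\le m_{xx'}$ whenever $x'$ exists and $z\notin\{x,x'\}$. Indirect scores: for $x\neq y$, $\hat v_{xy}=\max$ over all paths $x=x_0,\dots,x_n=y$ of $\min_{0\le i<n} v_{x_ix_{i+1}}$. Irreducible components are the classes of the equivalence relation $x\sim y$ iff $x=y$ or ($\hat v_{xy}>0$ and $\hat v_{yx}>0$). $x$ dominates $y$ iff $\hat v_{xy}>0$ and $\hat v_{yx}=0$; this passes to components. A top dominant irreducible component is an irreducible component dominating every other one; for a non-vanishing Llull matrix with CLC structure such a component exists (and is unique). *)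

theory Defs
  imports Complex_Main
begin

text \<open>A Llull matrix on A: only the values v x y for distinct x, y in A matter.\<close>
definition llull_matrix :: "'a set \<Rightarrow> ('a \<Rightarrow> 'a \<Rightarrow> real) \<Rightarrow> bool" where
  "llull_matrix A v \<longleftrightarrow>
     (\<forall>x\<in>A. \<forall>y\<in>A. x \<noteq> y \<longrightarrow> 0 \<le> v x y \<and> v x y \<le> 1 \<and> v x y + v y x \<le> 1)"

definition turnout :: "('a \<Rightarrow> 'a \<Rightarrow> real) \<Rightarrow> 'a \<Rightarrow> 'a \<Rightarrow> real" where
  "turnout v x y = v x y + v y x"

definition margin :: "('a \<Rightarrow> 'a \<Rightarrow> real) \<Rightarrow> 'a \<Rightarrow> 'a \<Rightarrow> real" where
  "margin v x y = v x y - v y x"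

text \<open>A total order on A is represented by a list enumerating A without repetitions.\<close>
definition prec :: "'a list \<Rightarrow> 'a \<Rightarrow> 'a \<Rightarrow> bool" where
  "prec xs x y \<longleftrightarrow> (\<exists>i j. i < j \<and> j < length xs \<and> xs ! i = x \<and> xs ! j = y)"

definition succ :: "'a list \<Rightarrow> 'a \<Rightarrow> 'a \<Rightarrow> bool" where
  "succ xs x x' \<longleftrightarrow> (\<exists>i. Suc i < length xs \<and> xs ! i = x \<and> xs ! Suc i = x')"

definition admissible_order :: "'a set \<Rightarrow> ('a \<Rightarrow> 'a \<Rightarrow> real) \<Rightarrow> 'a list \<Rightarrow> bool" where
  "admissible_order A v xs \<longleftrightarrow>
     distinct xs \<and> set xs = A \<and>
     (\<forall>x y. prec xs x y \<longrightarrow> v x y \<ge> v y x) \<and>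
     (\<forall>x y z. prec xs x y \<and> prec xs y z \<longrightarrow> v x z = max (v x y) (v y z)) \<and>
     (\<forall>x y z. prec xs x y \<and> prec xs y z \<longrightarrow> v z x = min (v z y) (v y x)) \<and>
     (\<forall>x x' z. succ xs x x' \<and> z \<in> A \<and> z \<notin> {x, x'} \<longrightarrow>
        0 \<le> turnout v x z - turnout v x' z \<and> turnout v x z - turnout v x' z \<le> margin v x x')"

definition has_CLC :: "'a set \<Rightarrow> ('a \<Rightarrow> 'a \<Rightarrow> real) \<Rightarrow> bool" where
  "has_CLC A v \<longleftrightarrow> (\<exists>xs. admissible_order A v xs)"

definition paths :: "'a set \<Rightarrow> 'a \<Rightarrow> 'a \<Rightarrow> 'a list set" where
  "paths A x y = {ps. 2 \<le> length ps \<and> hd ps = x \<and> last ps = y \<and> set ps \<subseteq> A \<and>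
                      (\<forall>i. Suc i < length ps \<longrightarrow> ps ! i \<noteq> ps ! Suc i)}"

definition path_min :: "('a \<Rightarrow> 'a \<Rightarrow> real) \<Rightarrow> 'a list \<Rightarrow> real" where
  "path_min v ps = Min {v (ps ! i) (ps ! Suc i) | i. Suc i < length ps}"

definition indirect :: "'a set \<Rightarrow> ('a \<Rightarrow> 'a \<Rightarrow> real) \<Rightarrow> 'a \<Rightarrow> 'a \<Rightarrow> real" where
  "indirect A v x y = Max (path_min v ` paths A x y)"

definition irred_rel :: "'a set \<Rightarrow> ('a \<Rightarrow> 'a \<Rightarrow> real) \<Rightarrow> 'a rel" where
  "irred_rel A v = {(x, y). x \<in> A \<and> y \<in> A \<and>
      (x = y \<or> (indirect A v x y > 0 \<and> indirect A v y x > 0))}"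

definition irred_components :: "'a set \<Rightarrow> ('a \<Rightarrow> 'a \<Rightarrow> real) \<Rightarrow> 'a set set" where
  "irred_components A v = A // irred_rel A v"

definition dominates :: "'a set \<Rightarrow> ('a \<Rightarrow> 'a \<Rightarrow> real) \<Rightarrow> 'a \<Rightarrow> 'a \<Rightarrow> bool" where
  "dominates A v x y \<longleftrightarrow> indirect A v x y > 0 \<and> indirect A v y x = 0"

definition comp_dominates :: "'a set \<Rightarrow> ('a \<Rightarrow> 'a \<Rightarrow> real) \<Rightarrow> 'a set \<Rightarrow> 'a set \<Rightarrow> bool" where
  "comp_dominates A v X Y \<longleftrightarrow> (\<forall>x\<in>X. \<forall>y\<in>Y. dominates A v x y)"

definition top_dominant_component :: "'a set \<Rightarrow> ('a \<Rightarrow> 'a \<Rightarrow> real) \<Rightarrow> 'a set \<Rightarrow> bool" where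
  "top_dominant_component A v X \<longleftrightarrow> X \<in> irred_components A v \<and>
     (\<forall>Y\<in>irred_components A v. Y \<noteq> X \<longrightarrow> comp_dominates A v X Y)"

definition mean_score :: "'a set \<Rightarrow> ('a \<Rightarrow> 'a \<Rightarrow> real) \<Rightarrow> 'a \<Rightarrow> real" where
  "mean_score A v x = (1 / (real (card A) - 1)) * (\<Sum>y\<in>A - {x}. v x y)"

end

theory Submission
  imports Defs Complex_Main
begin


lemma triple_arith: "(a::real) = max b c \<Longrightarrow> d = min e f \<Longrightarrow> f \<le> b \<Longrightarrow> e \<le> c \<Longrightarrow> c + e \<le> a + d
  \<Longrightarrow> f + b - (d + a) \<le> c - e \<Longrightarrow> e \<le> b \<and> f \<le> c"
  by (simp add: max_def min_def split: if_splits)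
lemma E1_arith1: "(a::real) = max s b \<Longrightarrow> d = min e s \<Longrightarrow> e \<le> b \<Longrightarrow> b + e \<le> a + d \<Longrightarrow> a + d - (b + e) \<le> s - s \<Longrightarrow> a = b \<and> d = e"
  by (simp add: max_def min_def split: if_splits)
lemma E1_arith2: "(c::real) = max d s \<Longrightarrow> b = min s a \<Longrightarrow> a \<le> d \<Longrightarrow> b + c \<le> a + d \<Longrightarrow> a + d - (b+c) \<le> s - s \<Longrightarrow> a = b \<and> d = c"
  by (simp add: max_def min_def split: if_splits)
lemma E_arith: "(a::real) = max p q \<Longrightarrow> b = min r s \<Longrightarrow> s \<le> p \<Longrightarrow> r \<le> q \<Longrightarrow> a = b \<Longrightarrow> p = s \<and> q = r \<and> p = r \<and> s = q"
  by (simp add: max_def min_def split: if_splits)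

context
  fixes A :: "'a set" and v :: "'a \<Rightarrow> 'a \<Rightarrow> real" and xs :: "'a list"
  assumes adm: "admissible_order A v xs"
begin

lemma dist: "distinct xs" and setA: "set xs = A"
  using adm unfolding admissible_order_def by auto

lemma prec_idx: "prec xs (xs!i) (xs!j)" if "i < j" "j < length xs"
  unfolding prec_def using that by blast

lemma ord_i: "i < j \<Longrightarrow> j < length xs \<Longrightarrow> v (xs!j) (xs!i) \<le> v (xs!i) (xs!j)"
  using adm prec_idx unfolding admissible_order_def by blast

lemma max3: "i<j \<Longrightarrow> j<k \<Longrightarrow> k<length xs \<Longrightarrow>
   v (xs!i) (xs!k) = max (v (xs!i) (xs!j)) (v (xs!j) (xs!k))"
  using adm prec_idx[of i j] prec_idx[of j k] unfolding admissible_order_def by auto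

lemma min3: "i<j \<Longrightarrow> j<k \<Longrightarrow> k<length xs \<Longrightarrow>
   v (xs!k) (xs!i) = min (v (xs!k) (xs!j)) (v (xs!j) (xs!i))"
  using adm prec_idx[of i j] prec_idx[of j k] unfolding admissible_order_def by auto

lemma turn:
  assumes "Suc i < length xs" "k < length xs" "k \<noteq> i" "k \<noteq> Suc i"
  shows "v (xs!Suc i) (xs!k) + v (xs!k) (xs!Suc i) \<le> v (xs!i) (xs!k) + v (xs!k) (xs!i) \<and>
     v (xs!i) (xs!k) + v (xs!k) (xs!i) - (v (xs!Suc i) (xs!k) + v (xs!k) (xs!Suc i))
        \<le> v (xs!i) (xs!Suc i) - v (xs!Suc i) (xs!i)"
proof -
  have s: "succ xs (xs!i) (xs!Suc i)" unfolding succ_def using assms by blast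
  have z: "xs!k \<in> A" using assms setA by auto
  have d: "xs!k \<notin> {xs!i, xs!Suc i}" using assms dist by (auto simp: nth_eq_iff_index_eq)
  show ?thesis using adm s z d unfolding admissible_order_def turnout_def margin_def by fastforce
qed

lemma step:
  assumes "Suc i < length xs" "k < length xs" "k \<noteq> i" "k \<noteq> Suc i"
  shows "v (xs!Suc i) (xs!k) \<le> v (xs!i) (xs!k) \<and> v (xs!k) (xs!i) \<le> v (xs!k) (xs!Suc i)"
proof (cases "k > Suc i")
  case True
  then show ?thesis using max3[of i "Suc i" k] min3[of i "Suc i" k] assms by auto
next
  case False
  then have "k < i" using assms by auto
  then show ?thesis using max3[of k i "Suc i"] min3[of k i "Suc i"] assms by auto
qed

lemma triple:
  assumes "Suc (Suc p) < length xs"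
  shows "v (xs!Suc (Suc p)) (xs!Suc p) \<le> v (xs!p) (xs!Suc p) \<and>
         v (xs!Suc p) (xs!p) \<le> v (xs!Suc p) (xs!Suc (Suc p))"
proof -
  have a: "v (xs!p) (xs!Suc (Suc p)) = max (v (xs!p) (xs!Suc p)) (v (xs!Suc p) (xs!Suc (Suc p)))"
    using max3[of p "Suc p" "Suc (Suc p)"] assms by auto
  have b: "v (xs!Suc (Suc p)) (xs!p) = min (v (xs!Suc (Suc p)) (xs!Suc p)) (v (xs!Suc p) (xs!p))"
    using min3[of p "Suc p" "Suc (Suc p)"] assms by auto
  have c1: "v (xs!Suc p) (xs!p) \<le> v (xs!p) (xs!Suc p)" using ord_i assms by auto
  have c2: "v (xs!Suc (Suc p)) (xs!Suc p) \<le> v (xs!Suc p) (xs!Suc (Suc p))" using ord_i assms by auto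
  have t1': "v (xs!Suc p) (xs!Suc (Suc p)) + v (xs!Suc (Suc p)) (xs!Suc p) \<le> v (xs!p) (xs!Suc (Suc p)) + v (xs!Suc (Suc p)) (xs!p)"
    using turn[of p "Suc (Suc p)"] assms by auto
  have t2': "v (xs!Suc p) (xs!p) + v (xs!p) (xs!Suc p) - (v (xs!Suc (Suc p)) (xs!p) + v (xs!p) (xs!Suc (Suc p)))
        \<le> v (xs!Suc p) (xs!Suc (Suc p)) - v (xs!Suc (Suc p)) (xs!Suc p)"
    using turn[of "Suc p" p] assms by auto
  show ?thesis using triple_arith[OF a b c1 c2 t1' t2'] .
qed

lemma mono_idx:
  assumes "k < length xs"
  shows "j < length xs \<Longrightarrow> i < j \<Longrightarrow> i \<noteq> k \<Longrightarrow> j \<noteq> k \<Longrightarrow>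
     v (xs!j) (xs!k) \<le> v (xs!i) (xs!k) \<and> v (xs!k) (xs!i) \<le> v (xs!k) (xs!j)"
proof (induction j arbitrary: i rule: less_induct)
  case (less j)
  then obtain j' where j: "j = Suc j'" by (cases j) auto
  show ?case
  proof (cases "j' = k")
    case False
    have s: "v (xs!j) (xs!k) \<le> v (xs!j') (xs!k) \<and> v (xs!k) (xs!j') \<le> v (xs!k) (xs!j)"
      using step[of j' k] less.prems j False assms by auto
    show ?thesis
    proof (cases "i = j'")
      case True then show ?thesis using s by simp
    next
      case False
      then have "i < j'" using less.prems j by auto
      then show ?thesis using less.IH[of j' i] s less.prems j \<open>j' \<noteq> k\<close> by force
    qed
  next
    case True
    then obtain p where p: "k = Suc p" using less.prems j by (cases k) auto
    have s: "v (xs!j) (xs!k) \<le> v (xs!p) (xs!k) \<and> v (xs!k) (xs!p) \<le> v (xs!k) (xs!j)"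
      using triple[of p] less.prems j p True by auto
    show ?thesis
    proof (cases "i = p")
      case True then show ?thesis using s by simp
    next
      case False
      then have "i < p" using less.prems j p True by auto
      then show ?thesis using less.IH[of p i] s less.prems j p True by force
    qed
  qed
qed

lemma E1:
  assumes "Suc i < length xs" "v (xs!i) (xs!Suc i) = v (xs!Suc i) (xs!i)"
    "k < length xs" "k \<noteq> i" "k \<noteq> Suc i"
  shows "v (xs!i) (xs!k) = v (xs!Suc i) (xs!k) \<and> v (xs!k) (xs!i) = v (xs!k) (xs!Suc i)"
proof -
  note t = turn[OF assms(1,3,4,5)]
  show ?thesis
  proof (cases "k > Suc i")
    case True
    have a: "v (xs!i) (xs!k) = max (v (xs!Suc i) (xs!i)) (v (xs!Suc i) (xs!k))"
      using max3[of i "Suc i" k] assms True by simp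
    have d: "v (xs!k) (xs!i) = min (v (xs!k) (xs!Suc i)) (v (xs!Suc i) (xs!i))"
      using min3[of i "Suc i" k] assms True by simp
    have o: "v (xs!k) (xs!Suc i) \<le> v (xs!Suc i) (xs!k)" using ord_i[of "Suc i" k] assms True by simp
    show ?thesis using E1_arith1[OF a d o] t assms(2) by simp
  next
    case False
    then have "k < i" using assms by auto
    have c: "v (xs!k) (xs!Suc i) = max (v (xs!k) (xs!i)) (v (xs!Suc i) (xs!i))"
      using max3[of k i "Suc i"] assms \<open>k < i\<close> by simp
    have b: "v (xs!Suc i) (xs!k) = min (v (xs!Suc i) (xs!i)) (v (xs!i) (xs!k))"
      using min3[of k i "Suc i"] assms \<open>k < i\<close> by simp
    have o: "v (xs!i) (xs!k) \<le> v (xs!k) (xs!i)" using ord_i[of k i] assms \<open>k < i\<close> by simp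
    show ?thesis using E1_arith2[OF c b o] t assms(2) by simp
  qed
qed

lemma E_idx:
  "\<forall>i. i + Suc d < length xs \<longrightarrow> v (xs!i) (xs!(i + Suc d)) = v (xs!(i + Suc d)) (xs!i) \<longrightarrow>
     (\<forall>k<length xs. k \<noteq> i \<longrightarrow> k \<noteq> i + Suc d \<longrightarrow>
        v (xs!i) (xs!k) = v (xs!(i + Suc d)) (xs!k) \<and> v (xs!k) (xs!i) = v (xs!k) (xs!(i + Suc d)))"
proof (induction d)
  case 0
  show ?case
  proof (intro allI impI)
    fix i k
    assume "i + Suc 0 < length xs" "v (xs!i) (xs!(i + Suc 0)) = v (xs!(i + Suc 0)) (xs!i)"
      "k < length xs" "k \<noteq> i" "k \<noteq> i + Suc 0"
    then show "v (xs!i) (xs!k) = v (xs!(i + Suc 0)) (xs!k) \<and> v (xs!k) (xs!i) = v (xs!k) (xs!(i + Suc 0))"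
      using E1[of i k] by simp
  qed
next
  case (Suc d)
  show ?case
  proof (intro allI impI)
    fix i k
    let ?j = "i + Suc (Suc d)" and ?w = "Suc i"
    assume h: "?j < length xs" "v (xs!i) (xs!?j) = v (xs!?j) (xs!i)" "k < length xs" "k \<noteq> i" "k \<noteq> ?j"
    have a: "v (xs!i) (xs!?j) = max (v (xs!i) (xs!?w)) (v (xs!?w) (xs!?j))"
      using max3[of i ?w ?j] h by auto
    have b: "v (xs!?j) (xs!i) = min (v (xs!?j) (xs!?w)) (v (xs!?w) (xs!i))"
      using min3[of i ?w ?j] h by auto
    have c1: "v (xs!?w) (xs!i) \<le> v (xs!i) (xs!?w)" using ord_i[of i ?w] h by simp
    have c2: "v (xs!?j) (xs!?w) \<le> v (xs!?w) (xs!?j)" using ord_i[of ?w ?j] h by simp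
    have e1: "v (xs!i) (xs!?w) = v (xs!?w) (xs!i)" and e2: "v (xs!?w) (xs!?j) = v (xs!?j) (xs!?w)"
      and e3: "v (xs!i) (xs!?w) = v (xs!?j) (xs!?w)" and e4: "v (xs!?w) (xs!i) = v (xs!?w) (xs!?j)"
      using E_arith[OF a b c1 c2 h(2)] by auto
    have j: "?j = ?w + Suc d" by simp
    show "v (xs!i) (xs!k) = v (xs!?j) (xs!k) \<and> v (xs!k) (xs!i) = v (xs!k) (xs!?j)"
    proof (cases "k = ?w")
      case True then show ?thesis using e3 e4 by simp
    next
      case False
      have r1: "v (xs!i) (xs!k) = v (xs!?w) (xs!k) \<and> v (xs!k) (xs!i) = v (xs!k) (xs!?w)"
        using E1[of i k] e1 h False by simp
      have r2: "v (xs!?w) (xs!k) = v (xs!?j) (xs!k) \<and> v (xs!k) (xs!?w) = v (xs!k) (xs!?j)"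
        using Suc.IH[rule_format, of ?w k] e2 h False j by (metis add_Suc)
      show ?thesis using r1 r2 by simp
    qed
  qed
qed

end


context
  fixes A :: "'a set" and v :: "'a \<Rightarrow> 'a \<Rightarrow> real" and xs :: "'a list"
  assumes adm: "admissible_order A v xs"
begin

lemma prec_iff: "i < length xs \<Longrightarrow> j < length xs \<Longrightarrow> prec xs (xs!i) (xs!j) \<longleftrightarrow> i < j"
  using dist[OF adm] prec_idx[OF adm, of i j] unfolding prec_def
  by (auto simp: nth_eq_iff_index_eq)

lemma idx: "x \<in> A \<Longrightarrow> \<exists>i<length xs. xs!i = x"
  using setA[OF adm] by (auto simp: in_set_conv_nth)

lemma total: "x \<in> A \<Longrightarrow> y \<in> A \<Longrightarrow> x \<noteq> y \<Longrightarrow> prec xs x y \<or> prec xs y x"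
proof -
  assume h: "x \<in> A" "y \<in> A" "x \<noteq> y"
  obtain i where i: "i < length xs" "xs!i = x" using idx h by blast
  obtain j where j: "j < length xs" "xs!j = y" using idx h by blast
  have "i \<noteq> j" using i j h by auto
  then show ?thesis using prec_iff[OF i(1) j(1)] prec_iff[OF j(1) i(1)] i j by auto
qed

lemma prec_ord: "prec xs x y \<Longrightarrow> v y x \<le> v x y"
  using adm unfolding admissible_order_def by blast

lemma M_el:
  assumes "prec xs x y" "z \<in> A" "z \<noteq> x" "z \<noteq> y"
  shows "v y z \<le> v x z \<and> v z x \<le> v z y"
proof -
  obtain i j where ij: "i < j" "j < length xs" "xs!i = x" "xs!j = y"
    using assms(1) unfolding prec_def by blast
  obtain k where k: "k < length xs" "xs!k = z" using idx assms by blast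
  have "k \<noteq> i" "k \<noteq> j" using ij k assms by auto
  then show ?thesis using mono_idx[OF adm k(1) ij(2,1)] ij k by simp
qed

lemma E_el:
  assumes "prec xs x y" "v x y = v y x" "z \<in> A" "z \<noteq> x" "z \<noteq> y"
  shows "v x z = v y z \<and> v z x = v z y"
proof -
  obtain i j where ij: "i < j" "j < length xs" "xs!i = x" "xs!j = y"
    using assms(1) unfolding prec_def by blast
  obtain d where d: "j = i + Suc d" using ij(1) by (auto simp: less_iff_Suc_add)
  obtain k where k: "k < length xs" "xs!k = z" using idx assms by blast
  have "k \<noteq> i" "k \<noteq> j" using ij k assms by auto
  then show ?thesis using E_idx[OF adm, of d, rule_format, of i k] ij k d assms(2) by simp
qed

lemma E_sym:
  assumes "x \<in> A" "y \<in> A" "x \<noteq> y" "v x y = v y x" "z \<in> A" "z \<noteq> x" "z \<noteq> y"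
  shows "v x z = v y z \<and> v z x = v z y"
  using total[OF assms(1-3)] E_el[of x y z] E_el[of y x z] assms by auto

end

lemma S_diff:
  fixes v :: "'a \<Rightarrow> 'a \<Rightarrow> real"
  assumes "finite A" "x \<in> A" "y \<in> A" "x \<noteq> y"
  shows "(\<Sum>z\<in>A-{x}. v x z) - (\<Sum>z\<in>A-{y}. v y z) =
    (v x y - v y x) + (\<Sum>z\<in>A-{x,y}. v x z - v y z)"
proof -
  have 1: "A - {x} = insert y (A - {x,y})" and 2: "A - {y} = insert x (A - {x,y})"
    using assms by auto
  have f: "finite (A - {x,y})" using assms by auto
  have "(\<Sum>z\<in>A-{x,y}. v x z - v y z) = (\<Sum>z\<in>A-{x,y}. v x z) - (\<Sum>z\<in>A-{x,y}. v y z)"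
    by (simp add: sum_subtractf)
  then show ?thesis unfolding 1 2 using f by (simp add: sum.insert)
qed

lemma pm_finite: "finite {v (ps ! i) (ps ! Suc i) |i. Suc i < length ps}"
  by (rule finite_image_set) (rule finite_subset[of _ "{..<length ps}"], auto)

lemma pm_in:
  assumes "ps \<in> paths A a b"
  shows "path_min v ps \<in> {v (ps ! i) (ps ! Suc i) |i. Suc i < length ps}"
proof -
  have "{v (ps ! i) (ps ! Suc i) |i. Suc i < length ps} \<noteq> {}"
    using assms unfolding paths_def by (auto intro!: exI[of _ 0])
  then show ?thesis unfolding path_min_def by (rule Min_in[OF pm_finite])
qed

lemma pm_range:
  assumes "ps \<in> paths A a b"
  shows "path_min v ps \<in> (\<lambda>(p,q). v p q) ` (A \<times> A)"
proof -
  obtain i where i: "Suc i < length ps" "path_min v ps = v (ps!i) (ps!Suc i)"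
    using pm_in[OF assms] by blast
  have "ps!i \<in> A" "ps!Suc i \<in> A" using assms i(1) nth_mem[of i ps] nth_mem[of "Suc i" ps]
    unfolding paths_def by auto
  then show ?thesis using i by force
qed

lemma pm_fin: "finite A \<Longrightarrow> finite (path_min v ` paths A a b)"
  by (rule finite_subset[of _ "(\<lambda>(p,q). v p q) ` (A \<times> A)"]) (use pm_range in auto)

lemma ind_ge: "finite A \<Longrightarrow> ps \<in> paths A a b \<Longrightarrow> path_min v ps \<le> indirect A v a b"
  unfolding indirect_def using pm_fin by (intro Max_ge) auto

lemma two_path: "a \<in> A \<Longrightarrow> b \<in> A \<Longrightarrow> a \<noteq> b \<Longrightarrow> [a,b] \<in> paths A a b"
  unfolding paths_def by (auto simp: less_Suc_eq)

lemma pm_two: "path_min v [a,b] = v a b"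
proof -
  have "{v ([a,b] ! i) ([a,b] ! Suc i) |i. Suc i < length [a,b]} = {v a b}" by auto
  then show ?thesis unfolding path_min_def by simp
qed

lemma ind_pos:
  assumes "finite A" "a \<in> A" "b \<in> A" "a \<noteq> b" "indirect A v a b > 0"
  shows "\<exists>ps \<in> paths A a b. path_min v ps > 0"
proof -
  have "path_min v ` paths A a b \<noteq> {}" using two_path[OF assms(2-4)] by blast
  then have "indirect A v a b \<in> path_min v ` paths A a b"
    unfolding indirect_def by (rule Max_in[OF pm_fin[OF assms(1)]])
  then show ?thesis using assms(5) by force
qed

lemma swap_path:
  assumes "ps \<in> paths A x y" "x \<in> A" "y \<in> A"
    and "\<And>a b. a \<in> A \<Longrightarrow> b \<in> A \<Longrightarrow> a \<noteq> b \<Longrightarrow> v (\<sigma> a) (\<sigma> b) = v a b"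
    and "\<sigma> = (\<lambda>a. if a = x then y else if a = y then x else a)"
  shows "map \<sigma> ps \<in> paths A y x \<and> path_min v (map \<sigma> ps) = path_min v ps"
proof -
  have ne: "ps \<noteq> []" using assms(1) unfolding paths_def by auto
  have inj: "inj \<sigma>" unfolding assms(5) inj_def by auto
  have sA: "\<sigma> ` A \<subseteq> A" using assms(2,3) unfolding assms(5) by auto
  have P: "2 \<le> length ps" "hd ps = x" "last ps = y" "set ps \<subseteq> A"
     "\<forall>i. Suc i < length ps \<longrightarrow> ps ! i \<noteq> ps ! Suc i"
    using assms(1) unfolding paths_def by auto
  have h1: "hd (map \<sigma> ps) = y" using ne P(2) by (simp add: hd_map assms(5))
  have h2: "last (map \<sigma> ps) = x" using ne P(3) by (simp add: last_map assms(5))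
  have h3: "set (map \<sigma> ps) \<subseteq> A" using P(4) sA by auto
  have h4: "\<forall>i. Suc i < length (map \<sigma> ps) \<longrightarrow> map \<sigma> ps ! i \<noteq> map \<sigma> ps ! Suc i"
  proof (intro allI impI)
    fix i assume "Suc i < length (map \<sigma> ps)"
    then have "Suc i < length ps" by simp
    then show "map \<sigma> ps ! i \<noteq> map \<sigma> ps ! Suc i" using P(5) inj by (simp add: inj_eq)
  qed
  have p1: "map \<sigma> ps \<in> paths A y x"
    unfolding paths_def using h1 h2 h3 h4 P(1) by simp
  have "{v (map \<sigma> ps ! i) (map \<sigma> ps ! Suc i) |i. Suc i < length (map \<sigma> ps)} =
        {v (ps ! i) (ps ! Suc i) |i. Suc i < length ps}"
  proof -
    have eq: "\<And>i. Suc i < length ps \<Longrightarrow> v (map \<sigma> ps ! i) (map \<sigma> ps ! Suc i) = v (ps ! i) (ps ! Suc i)"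
    proof -
      fix i assume i: "Suc i < length ps"
      have "ps!i \<in> A" "ps!Suc i \<in> A" "ps!i \<noteq> ps!Suc i"
        using assms(1) i nth_mem[of i ps] nth_mem[of "Suc i" ps] unfolding paths_def by auto
      then show "v (map \<sigma> ps ! i) (map \<sigma> ps ! Suc i) = v (ps ! i) (ps ! Suc i)"
        using assms(4) i by simp
    qed
    show ?thesis unfolding length_map
    proof (rule set_eqI, rule iffI)
      fix u assume "u \<in> {v (map \<sigma> ps ! i) (map \<sigma> ps ! Suc i) |i. Suc i < length ps}"
      then obtain i where "u = v (map \<sigma> ps ! i) (map \<sigma> ps ! Suc i)" "Suc i < length ps" by blast
      then show "u \<in> {v (ps ! i) (ps ! Suc i) |i. Suc i < length ps}" using eq by auto
    next
      fix u assume "u \<in> {v (ps ! i) (ps ! Suc i) |i. Suc i < length ps}"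
      then obtain i where "u = v (ps ! i) (ps ! Suc i)" "Suc i < length ps" by blast
      then show "u \<in> {v (map \<sigma> ps ! i) (map \<sigma> ps ! Suc i) |i. Suc i < length ps}" using eq[of i] by (intro CollectI exI[of _ i]) simp
    qed
  qed
  then show ?thesis using p1 unfolding path_min_def by simp
qed



theorem lemma3p4:
  fixes A :: "'a set" and v :: "'a \<Rightarrow> 'a \<Rightarrow> real" and xs :: "'a list" and X :: "'a set"
  assumes "finite A" and "card A \<ge> 2"
    and "llull_matrix A v"
    and "has_CLC A v"
    and "\<exists>x\<in>A. \<exists>y\<in>A. x \<noteq> y \<and> v x y \<noteq> 0"
    and "admissible_order A v xs"
    and "top_dominant_component A v X"
  shows "\<forall>x\<in>A. \<forall>y\<in>A. x \<noteq> y \<longrightarrow>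
     (prec xs x y \<longrightarrow> mean_score A v x \<ge> mean_score A v y) \<and>
     (mean_score A v x = mean_score A v y \<longleftrightarrow> v x y = v y x) \<and>
     (mean_score A v x \<ge> mean_score A v y \<longrightarrow>
        v x y \<ge> v y x \<and> (\<forall>z\<in>A. z \<notin> {x, y} \<longrightarrow> v x z \<ge> v y z \<and> v z x \<le> v z y)) \<and>
     (mean_score A v x > mean_score A v y \<longleftrightarrow> v x y > v y x) \<and>
     (v x y > v y x \<longrightarrow> prec xs x y) \<and>
     (x \<in> X \<and> y \<notin> X \<longrightarrow> mean_score A v x > mean_score A v y)"
proof -
  note fin = assms(1) and adm = assms(6) and ll = assms(3)
  define S where "S = (\<lambda>x. \<Sum>z\<in>A-{x}. v x z)"
  define c where "c = 1 / (real (card A) - 1)"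
  have cpos: "c > 0" using assms(2) unfolding c_def by simp
  have ms: "\<And>x. mean_score A v x = c * S x" unfolding mean_score_def c_def S_def by simp
  have cmp: "\<And>x y. mean_score A v x \<le> mean_score A v y \<longleftrightarrow> S x \<le> S y"
    "\<And>x y. mean_score A v x < mean_score A v y \<longleftrightarrow> S x < S y"
    "\<And>x y. mean_score A v x = mean_score A v y \<longleftrightarrow> S x = S y"
    unfolding ms using cpos by auto
  have nonneg: "\<And>a b. a \<in> A \<Longrightarrow> b \<in> A \<Longrightarrow> a \<noteq> b \<Longrightarrow> 0 \<le> v a b"
    using ll unfolding llull_matrix_def by blast
  show ?thesis unfolding cmp
  proof (intro ballI impI)
    fix x y assume x: "x \<in> A" and y: "y \<in> A" and xy: "x \<noteq> y"
    define D where "D = S x - S y"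
    have Dsum: "D = (v x y - v y x) + (\<Sum>z\<in>A-{x,y}. v x z - v y z)"
      unfolding D_def S_def using S_diff[OF fin x y xy] .
    have K1: "prec xs x y \<Longrightarrow> v x y - v y x \<le> D"
    proof -
      assume p: "prec xs x y"
      have "0 \<le> (\<Sum>z\<in>A-{x,y}. v x z - v y z)"
        by (rule sum_nonneg) (use M_el[OF adm p] in auto)
      then show ?thesis using Dsum by linarith
    qed
    have K1': "prec xs y x \<Longrightarrow> D \<le> v x y - v y x"
    proof -
      assume p: "prec xs y x"
      have "(\<Sum>z\<in>A-{x,y}. v x z - v y z) \<le> 0"
        by (rule sum_nonpos) (use M_el[OF adm p] in auto)
      then show ?thesis using Dsum by linarith
    qed
    have K2: "v x y = v y x \<Longrightarrow> D = 0"
    proof -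
      assume e: "v x y = v y x"
      have "(\<Sum>z\<in>A-{x,y}. v x z - v y z) = 0"
        by (rule sum.neutral) (use E_sym[OF adm x y xy e] in auto)
      then show ?thesis using Dsum e by linarith
    qed
    have o1: "prec xs x y \<Longrightarrow> v y x \<le> v x y" using prec_ord[OF adm] by blast
    have o2: "prec xs y x \<Longrightarrow> v x y \<le> v y x" using prec_ord[OF adm] by blast
    have tot: "prec xs x y \<or> prec xs y x" using total[OF adm x y xy] .
    have eqv: "D = 0 \<longleftrightarrow> v x y = v y x"
    proof
      assume D0: "D = 0"
      show "v x y = v y x"
      proof (cases "prec xs x y")
        case True then show ?thesis using K1[OF True] o1[OF True] D0 by linarith
      next
        case False then have p: "prec xs y x" using tot by simp
        then show ?thesis using K1'[OF p] o2[OF p] D0 by linarith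
      qed
    qed (rule K2)
    have gt: "D > 0 \<longleftrightarrow> v x y > v y x"
    proof
      assume "D > 0"
      show "v x y > v y x"
      proof (cases "prec xs x y")
        case True then show ?thesis using o1[OF True] eqv \<open>D > 0\<close> by force
      next
        case False then have p: "prec xs y x" using tot by simp
        then show ?thesis using K1'[OF p] o2[OF p] \<open>D > 0\<close> by linarith
      qed
    next
      assume "v x y > v y x"
      show "D > 0"
      proof (cases "prec xs x y")
        case True then show ?thesis using K1[OF True] \<open>v x y > v y x\<close> by linarith
      next
        case False then have p: "prec xs y x" using tot by simp
        then show ?thesis using o2[OF p] \<open>v x y > v y x\<close> by linarith
      qed
    qed
    have e: "v x y > v y x \<longrightarrow> prec xs x y" using tot o2 by force
    have a: "prec xs x y \<longrightarrow> S y \<le> S x" using K1 o1 unfolding D_def by force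
    have cc: "S y \<le> S x \<longrightarrow> v y x \<le> v x y \<and> (\<forall>z\<in>A. z \<notin> {x, y} \<longrightarrow> v y z \<le> v x z \<and> v z x \<le> v z y)"
    proof
      assume "S y \<le> S x"
      then have "D = 0 \<or> D > 0" unfolding D_def by linarith
      then show "v y x \<le> v x y \<and> (\<forall>z\<in>A. z \<notin> {x, y} \<longrightarrow> v y z \<le> v x z \<and> v z x \<le> v z y)"
      proof
        assume "D = 0"
        then have ee: "v x y = v y x" using eqv by simp
        show ?thesis using E_sym[OF adm x y xy ee] ee by auto
      next
        assume "D > 0"
        then have "v x y > v y x" using gt by simp
        then have p: "prec xs x y" using e by simp
        show ?thesis using M_el[OF adm p] o1[OF p] by auto
      qed
    qed
    have f: "x \<in> X \<and> y \<notin> X \<longrightarrow> D > 0"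
    proof
      assume xX: "x \<in> X \<and> y \<notin> X"
      define Y where "Y = irred_rel A v `` {y}"
      have Yc: "Y \<in> irred_components A v" unfolding Y_def irred_components_def
        using y by (rule quotientI)
      have "y \<in> Y" unfolding Y_def irred_rel_def using y by auto
      then have "Y \<noteq> X" using xX by auto
      then have "comp_dominates A v X Y" using assms(7) Yc unfolding top_dominant_component_def by auto
      then have dom: "dominates A v x y" using xX \<open>y \<in> Y\<close> unfolding comp_dominates_def by auto
      then have ixy: "indirect A v x y > 0" and iyx: "indirect A v y x = 0"
        unfolding dominates_def by auto
      have "v x y > v y x"
      proof (rule ccontr)
        assume "\<not> v x y > v y x"
        have "v y x \<le> indirect A v y x"
          using ind_ge[OF fin two_path[OF y x xy[symmetric]], of v] pm_two[of v y x] by (metis)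
        then have "v y x = 0" using iyx nonneg[OF y x xy[symmetric]] by simp
        then have z: "v x y = 0" "v y x = 0"
          using \<open>\<not> v x y > v y x\<close> nonneg[OF x y xy] by auto
        have E: "\<And>z. z \<in> A \<Longrightarrow> z \<noteq> x \<Longrightarrow> z \<noteq> y \<Longrightarrow> v x z = v y z \<and> v z x = v z y"
        proof -
          fix w assume w: "w \<in> A" "w \<noteq> x" "w \<noteq> y"
          have exy: "v x y = v y x" using z by simp
          show "v x w = v y w \<and> v w x = v w y" using E_sym[OF adm x y xy exy w] .
        qed
        define \<sigma> where "\<sigma> = (\<lambda>a. if a = x then y else if a = y then x else a)"
        have sv: "\<And>a b. a \<in> A \<Longrightarrow> b \<in> A \<Longrightarrow> a \<noteq> b \<Longrightarrow> v (\<sigma> a) (\<sigma> b) = v a b"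
        proof -
          fix a b assume ab: "a \<in> A" "b \<in> A" "a \<noteq> b"
          show "v (\<sigma> a) (\<sigma> b) = v a b"
            unfolding \<sigma>_def using ab E[of a] E[of b] z xy by (auto simp del: )
        qed
        obtain ps where ps: "ps \<in> paths A x y" "path_min v ps > 0"
          using ind_pos[OF fin x y xy ixy] by blast
        have sw: "map \<sigma> ps \<in> paths A y x \<and> path_min v (map \<sigma> ps) = path_min v ps"
          using swap_path[where \<sigma>=\<sigma> and v=v, OF ps(1) x y sv \<sigma>_def] by blast
        have "path_min v (map \<sigma> ps) \<le> indirect A v y x"
          using ind_ge[OF fin] sw by blast
        then show False using sw ps(2) iyx by simp
      qed
      then show "D > 0" using gt by simp
    qed
    show "(prec xs x y \<longrightarrow> S y \<le> S x) \<and>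
         (S x = S y) = (v x y = v y x) \<and>
         (S y \<le> S x \<longrightarrow> v y x \<le> v x y \<and> (\<forall>z\<in>A. z \<notin> {x, y} \<longrightarrow> v y z \<le> v x z \<and> v z x \<le> v z y)) \<and>
         (S y < S x) = (v y x < v x y) \<and>
         (v y x < v x y \<longrightarrow> prec xs x y) \<and>
         (x \<in> X \<and> y \<notin> X \<longrightarrow> S y < S x)"
      using a cc e f eqv gt unfolding D_def by auto
  qed
qed

end
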